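(* For every $\alpha>0$ there is $L_0$ such that for every integer $L\geq L_0$ there is $\vartheta_0>0$ such that for every $0<\vartheta\leq\vartheta_0$ there is $n_0$ such that for all $n\geq n_0$ the following holds. Let $H=([n],E)$ be a $3$-uniform hypergraph with $d(i,j)\geq\min\left(i,j,\frac{n}{2}\right)+\alpha n$ for all $\{i,j\}\in[n]^{(2)}$, and let $\mathcal{R}\subseteq[n]$ be a set with $\frac{\vartheta^2}{2}n\leq|\mathcal{R}|\leq\vartheta^2 n$ such that for all disjoint ordered pairs of distinct vertices $(x,y),(w,z)\in[n]^2$ there are at least $\vartheta|\mathcal{R}|^{L-2}/2$ tight paths of length $L$ in $H$ connecting $(x,y)$ and $(w,z)$ with all internal vertices in $\mathcal{R}$. If $\mathcal{R}'\subseteq\mathcal{R}$ with $|\mathcal{R}'|\leq 2\vartheta^4 n$, then for all disjoint ordered pairs of distinct vertices $(x,y),(w,z)\in[n]^2$ there is a tight $(x,y)$-$(w,z)$-path of length $L$ in $H$ with all internal vertices belonging to $\mathcal{R}\setminus\mathcal{R}'$.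
   Context: Vertices are the integers $[n]$, compared as integers. $d(v,w)=|\{x: \{v,w,x\}\in E\}|$ is the pair degree. A tight path of length $\ell$ (number of edges) is a 3-graph on distinct vertices $x_1,\dots,x_{\ell+2}$ with edges $x_ix_{i+1}x_{i+2}$, $i\in[\ell]$; it is an $(x_1,x_2)$-$(x_{\ell+1},x_{\ell+2})$-path (connects these pairs), and its internal vertices are $x_3,\dots,x_\ell$. *)

theory Defs
  imports Complex_Main
begin

definition uniform3 :: "nat \<Rightarrow> nat set set \<Rightarrow> bool" where
  "uniform3 n E \<longleftrightarrow> (\<forall>e\<in>E. e \<subseteq> {1..n} \<and> card e = 3)"

definition pair_degree :: "nat set set \<Rightarrow> nat \<Rightarrow> nat \<Rightarrow> nat" where
  "pair_degree E v w = card {x. {v, w, x} \<in> E}"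

definition tight_path :: "nat set set \<Rightarrow> nat list \<Rightarrow> bool" where
  "tight_path E xs \<longleftrightarrow> distinct xs \<and>
     (\<forall>i. i + 2 < length xs \<longrightarrow> {xs ! i, xs ! (i+1), xs ! (i+2)} \<in> E)"

text \<open>Tight (x,y)-(w,z)-paths of length L (L edges, L+2 vertices) whose internal
  vertices x_3,...,x_L (0-based indices 2..L-1) all lie in S.\<close>
definition tight_paths_conn ::
  "nat set set \<Rightarrow> nat \<Rightarrow> nat \<Rightarrow> nat \<Rightarrow> nat \<Rightarrow> nat \<Rightarrow> nat set \<Rightarrow> nat list set" where
  "tight_paths_conn E L x y w z S = {xs. length xs = L + 2 \<and> tight_path E xs \<and>
     xs ! 0 = x \<and> xs ! 1 = y \<and> xs ! L = w \<and> xs ! (L+1) = z \<and>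
     (\<forall>i. 2 \<le> i \<and> i < L \<longrightarrow> xs ! i \<in> S)}"

definition disj_pairs :: "nat \<Rightarrow> nat \<Rightarrow> nat \<Rightarrow> nat \<Rightarrow> nat \<Rightarrow> bool" where
  "disj_pairs n x y w z \<longleftrightarrow> {x, y, w, z} \<subseteq> {1..n} \<and> x \<noteq> y \<and> w \<noteq> z \<and>
     {x, y} \<inter> {w, z} = {}"

end

theory Submission
  imports Defs
begin

definition PP :: "nat \<Rightarrow> nat \<Rightarrow> nat \<Rightarrow> nat \<Rightarrow> nat \<Rightarrow> nat set \<Rightarrow> nat list set" where
  "PP L x y w z S = {xs. length xs = L + 2 \<and>
     xs ! 0 = x \<and> xs ! 1 = y \<and> xs ! L = w \<and> xs ! (L+1) = z \<and>
     (\<forall>i. 2 \<le> i \<and> i < L \<longrightarrow> xs ! i \<in> S)}"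

lemma PP_finite: assumes "finite S" shows "finite (PP L x y w z S)"
proof -
  have "PP L x y w z S \<subseteq> {xs. set xs \<subseteq> insert x (insert y (insert w (insert z S))) \<and> length xs = L+2}"
  proof (rule subsetI, simp only: mem_Collect_eq, rule conjI)
    fix xs assume a0: "xs \<in> PP L x y w z S"
    then show "length xs = L+2" by (simp add: PP_def)
    show "set xs \<subseteq> insert x (insert y (insert w (insert z S)))"
    proof
    fix v assume a1: "v \<in> set xs"
    note a = a0 a1
    then obtain i where i: "i < length xs" "xs ! i = v" by (auto simp: in_set_conv_nth)
    show "v \<in> insert x (insert y (insert w (insert z S)))"
      using a i unfolding PP_def
      by (cases "i = 0"; cases "i = 1"; cases "i = L"; cases "i = L+1"; auto)
    qed
  qed
  moreover have "finite {xs. set xs \<subseteq> insert x (insert y (insert w (insert z S))) \<and> length xs = L+2}"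
    using assms by (intro finite_lists_length_eq) simp
  ultimately show ?thesis by (rule finite_subset)
qed

lemma PP_bad:
  assumes "finite R" "R' \<subseteq> R" "k + 2 < L"
  shows "card {xs \<in> PP L x y w z R. xs ! (k+2) \<in> R'} \<le> card R' * card R ^ (L-3)"
proof -
  define mid where "mid xs = take (L-2) (drop 2 xs)" for xs :: "nat list"
  define \<phi> where "\<phi> xs = (xs ! (k+2), take k (mid xs) @ drop (Suc k) (mid xs))" for xs
  let ?A = "{xs \<in> PP L x y w z R. xs ! (k+2) \<in> R'}"
  let ?B = "R' \<times> {zs. set zs \<subseteq> R \<and> length zs = L-3}"
  have midn: "mid xs ! j = xs ! (j+2)" if "length xs = L+2" "j < L-2" for xs j
    using that by (simp add: mid_def add.commute)
  have midl: "length (mid xs) = L-2" if "length xs = L+2" for xs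
    using that by (simp add: mid_def)
  have inj: "inj_on \<phi> ?A"
  proof (rule inj_onI)
    fix xs ys assume xs: "xs \<in> ?A" and ys: "ys \<in> ?A" and e: "\<phi> xs = \<phi> ys"
    have lx: "length xs = L+2" and ly: "length ys = L+2" using xs ys by (auto simp: PP_def)
    have "mid xs = mid ys"
    proof -
      have k1: "k < length (mid xs)" "k < length (mid ys)" using midl lx ly assms by auto
      have "mid xs ! k = mid ys ! k" using e midn[OF lx, of k] midn[OF ly, of k] assms
        by (simp add: \<phi>_def)
      moreover have "take k (mid xs) = take k (mid ys)" "drop (Suc k) (mid xs) = drop (Suc k) (mid ys)"
        using e k1 unfolding \<phi>_def by (auto simp: append_eq_append_conv)
      ultimately show ?thesis using id_take_nth_drop[OF k1(1)] id_take_nth_drop[OF k1(2)] by metis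
    qed
    show "xs = ys"
    proof (rule nth_equalityI)
      show "length xs = length ys" using lx ly by simp
      fix i assume "i < length xs"
      show "xs ! i = ys ! i"
      proof (cases "2 \<le> i \<and> i < L")
        case True
        then obtain j where j: "i = j+2" "j < L-2" by (metis add.commute le_Suc_ex less_diff_conv)
        then show ?thesis using midn[OF lx, of j] midn[OF ly, of j] \<open>mid xs = mid ys\<close> by simp
      next
        case False
        then have "i = 0 \<or> i = 1 \<or> i = L \<or> i = L+1" using \<open>i < length xs\<close> lx by auto
        then show ?thesis using xs ys by (auto simp: PP_def)
      qed
    qed
  qed
  have sub: "\<phi> ` ?A \<subseteq> ?B"
  proof (rule image_subsetI)
    fix xs assume "xs \<in> ?A"
    then have xs: "xs \<in> PP L x y w z R" "xs ! (k+2) \<in> R'" by auto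
    have lx: "length xs = L+2" using xs by (auto simp: PP_def)
    have "set (mid xs) \<subseteq> R"
    proof
      fix v assume "v \<in> set (mid xs)"
      then obtain j where "j < L-2" "mid xs ! j = v" using midl[OF lx] by (auto simp: in_set_conv_nth)
      then show "v \<in> R" using midn[OF lx] xs by (auto simp: PP_def)
    qed
    then have "set (take k (mid xs) @ drop (Suc k) (mid xs)) \<subseteq> R"
      using set_take_subset set_drop_subset by fastforce
    moreover have "length (take k (mid xs) @ drop (Suc k) (mid xs)) = L-3"
      using midl[OF lx] assms by simp
    ultimately show "\<phi> xs \<in> ?B" using xs by (simp add: \<phi>_def)
  qed
  have fB: "finite ?B" using assms finite_subset[OF assms(2)] by (simp add: finite_lists_length_eq)
  have "card ?A = card (\<phi> ` ?A)" using card_image[OF inj] by simp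
  also have "\<dots> \<le> card ?B" using card_mono[OF fB sub] .
  also have "\<dots> = card R' * card R ^ (L-3)"
    using assms finite_subset[OF assms(2)] by (simp add: card_cartesian_product card_lists_length_eq)
  finally show ?thesis .
qed
theorem lemma2p3:
  shows "\<forall>\<alpha>::real. \<alpha> > 0 \<longrightarrow> (\<exists>L0::nat. \<forall>L\<ge>L0. \<exists>\<theta>0::real. \<theta>0 > 0 \<and>
    (\<forall>\<theta>::real. 0 < \<theta> \<and> \<theta> \<le> \<theta>0 \<longrightarrow> (\<exists>n0::nat. \<forall>n\<ge>n0.
      \<forall>E R R'.
        uniform3 n E \<longrightarrow>
        (\<forall>i\<in>{1..n}. \<forall>j\<in>{1..n}. i \<noteq> j \<longrightarrow>
            real (pair_degree E i j) \<ge> min (min (real i) (real j)) (real n / 2) + \<alpha> * real n) \<longrightarrow>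
        R \<subseteq> {1..n} \<longrightarrow>
        \<theta>^2 / 2 * real n \<le> real (card R) \<longrightarrow> real (card R) \<le> \<theta>^2 * real n \<longrightarrow>
        (\<forall>x y w z. disj_pairs n x y w z \<longrightarrow>
            real (card (tight_paths_conn E L x y w z R)) \<ge> \<theta> * real (card R) ^ (L - 2) / 2) \<longrightarrow>
        R' \<subseteq> R \<longrightarrow> real (card R') \<le> 2 * \<theta>^4 * real n \<longrightarrow>
        (\<forall>x y w z. disj_pairs n x y w z \<longrightarrow>
            tight_paths_conn E L x y w z (R - R') \<noteq> {}))))"
proof (intro allI impI)
  fix \<alpha> :: real assume "\<alpha> > 0"
  show "\<exists>L0::nat. \<forall>L\<ge>L0. \<exists>\<theta>0::real. \<theta>0 > 0 \<and>
    (\<forall>\<theta>::real. 0 < \<theta> \<and> \<theta> \<le> \<theta>0 \<longrightarrow> (\<exists>n0::nat. \<forall>n\<ge>n0.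
      \<forall>E R R'.
        uniform3 n E \<longrightarrow>
        (\<forall>i\<in>{1..n}. \<forall>j\<in>{1..n}. i \<noteq> j \<longrightarrow>
            real (pair_degree E i j) \<ge> min (min (real i) (real j)) (real n / 2) + \<alpha> * real n) \<longrightarrow>
        R \<subseteq> {1..n} \<longrightarrow>
        \<theta>^2 / 2 * real n \<le> real (card R) \<longrightarrow> real (card R) \<le> \<theta>^2 * real n \<longrightarrow>
        (\<forall>x y w z. disj_pairs n x y w z \<longrightarrow>
            real (card (tight_paths_conn E L x y w z R)) \<ge> \<theta> * real (card R) ^ (L - 2) / 2) \<longrightarrow>
        R' \<subseteq> R \<longrightarrow> real (card R') \<le> 2 * \<theta>^4 * real n \<longrightarrow>
        (\<forall>x y w z. disj_pairs n x y w z \<longrightarrow>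
            tight_paths_conn E L x y w z (R - R') \<noteq> {})))"
  proof (intro exI[of _ "3::nat"] allI impI)
    fix L :: nat assume L3: "L \<ge> 3"
    show "\<exists>\<theta>0::real. \<theta>0 > 0 \<and>
    (\<forall>\<theta>::real. 0 < \<theta> \<and> \<theta> \<le> \<theta>0 \<longrightarrow> (\<exists>n0::nat. \<forall>n\<ge>n0.
      \<forall>E R R'.
        uniform3 n E \<longrightarrow>
        (\<forall>i\<in>{1..n}. \<forall>j\<in>{1..n}. i \<noteq> j \<longrightarrow>
            real (pair_degree E i j) \<ge> min (min (real i) (real j)) (real n / 2) + \<alpha> * real n) \<longrightarrow>
        R \<subseteq> {1..n} \<longrightarrow>
        \<theta>^2 / 2 * real n \<le> real (card R) \<longrightarrow> real (card R) \<le> \<theta>^2 * real n \<longrightarrow>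
        (\<forall>x y w z. disj_pairs n x y w z \<longrightarrow>
            real (card (tight_paths_conn E L x y w z R)) \<ge> \<theta> * real (card R) ^ (L - 2) / 2) \<longrightarrow>
        R' \<subseteq> R \<longrightarrow> real (card R') \<le> 2 * \<theta>^4 * real n \<longrightarrow>
        (\<forall>x y w z. disj_pairs n x y w z \<longrightarrow>
            tight_paths_conn E L x y w z (R - R') \<noteq> {})))"
    proof (intro exI[of _ "1 / (8 * real L)"] conjI allI impI)
      show "0 < 1 / (8 * real L)" using L3 by simp
      fix \<theta> :: real assume th: "0 < \<theta> \<and> \<theta> \<le> 1 / (8 * real L)"
      show "\<exists>n0::nat. \<forall>n\<ge>n0.
      \<forall>E R R'.
        uniform3 n E \<longrightarrow>
        (\<forall>i\<in>{1..n}. \<forall>j\<in>{1..n}. i \<noteq> j \<longrightarrow>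
            real (pair_degree E i j) \<ge> min (min (real i) (real j)) (real n / 2) + \<alpha> * real n) \<longrightarrow>
        R \<subseteq> {1..n} \<longrightarrow>
        \<theta>^2 / 2 * real n \<le> real (card R) \<longrightarrow> real (card R) \<le> \<theta>^2 * real n \<longrightarrow>
        (\<forall>x y w z. disj_pairs n x y w z \<longrightarrow>
            real (card (tight_paths_conn E L x y w z R)) \<ge> \<theta> * real (card R) ^ (L - 2) / 2) \<longrightarrow>
        R' \<subseteq> R \<longrightarrow> real (card R') \<le> 2 * \<theta>^4 * real n \<longrightarrow>
        (\<forall>x y w z. disj_pairs n x y w z \<longrightarrow>
            tight_paths_conn E L x y w z (R - R') \<noteq> {})"
      proof (intro exI[of _ "1::nat"] allI impI)
        fix n :: nat and E R R' x y w z
        assume n1: "n \<ge> 1" and RS: "R \<subseteq> {1..n}"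
          and Rlo: "\<theta>^2 / 2 * real n \<le> real (card R)"
          and cnt: "\<forall>x y w z. disj_pairs n x y w z \<longrightarrow>
            real (card (tight_paths_conn E L x y w z R)) \<ge> \<theta> * real (card R) ^ (L - 2) / 2"
          and R'R: "R' \<subseteq> R" and R'hi: "real (card R') \<le> 2 * \<theta>^4 * real n"
          and dp: "disj_pairs n x y w z"
        show "tight_paths_conn E L x y w z (R - R') \<noteq> {}"
        proof
          assume empty: "tight_paths_conn E L x y w z (R - R') = {}"
          have fR: "finite R" using RS finite_subset by blast
          let ?U = "\<Union>k\<in>{..<L-2}. {xs \<in> PP L x y w z R. xs ! (k+2) \<in> R'}"
          have sub: "tight_paths_conn E L x y w z R \<subseteq> ?U"
          proof
            fix xs assume xs: "xs \<in> tight_paths_conn E L x y w z R"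
            then have "xs \<notin> tight_paths_conn E L x y w z (R - R')" using empty by simp
            then obtain i where i: "2 \<le> i" "i < L" "xs ! i \<notin> R - R'"
              using xs unfolding tight_paths_conn_def by auto
            then have "xs ! i \<in> R'" using xs unfolding tight_paths_conn_def by auto
            moreover have "xs \<in> PP L x y w z R" using xs unfolding tight_paths_conn_def PP_def by auto
            moreover obtain j where j: "i = j + 2" using i(1) by (metis add.commute le_Suc_ex)
            ultimately show "xs \<in> ?U" using i
              by (intro UN_I[of j]) auto
          qed
          have fU: "finite ?U" using PP_finite[OF fR] by auto
          have "card (tight_paths_conn E L x y w z R) \<le> card ?U" using card_mono[OF fU sub] .
          also have "\<dots> \<le> (\<Sum>k\<in>{..<L-2}. card {xs \<in> PP L x y w z R. xs ! (k+2) \<in> R'})"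
            by (rule card_UN_le) simp
          also have "\<dots> \<le> (\<Sum>k\<in>{..<L-2}. card R' * card R ^ (L-3))"
            by (rule sum_mono, rule PP_bad[OF fR R'R]) auto
          also have "\<dots> = (L-2) * (card R' * card R ^ (L-3))" by simp
          finally have c0: "card (tight_paths_conn E L x y w z R) \<le> (L-2) * (card R' * card R ^ (L-3))" .
          define r where "r = real (card R)"
          define r' where "r' = real (card R')"
          have c: "real (card (tight_paths_conn E L x y w z R)) \<le> real (L-2) * r' * r ^ (L-3)"
            unfolding r_def r'_def using of_nat_mono[OF c0, where 'a=real] by (simp add: mult.assoc)
          have thp: "\<theta> > 0" using th by simp
          have np: "real n > 0" using n1 by simp
          have "\<theta>^2 / 2 * real n > 0" using thp np by simp
          then have rpos: "r > 0" using Rlo unfolding r_def by linarith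
          have pw: "r ^ (L-2) = r * r ^ (L-3)"
          proof -
            have "L - 2 = Suc (L-3)" using L3 by simp
            then show ?thesis by simp
          qed
          have cn: "\<theta> * r ^ (L - 2) / 2 \<le> real (card (tight_paths_conn E L x y w z R))"
            using cnt dp unfolding r_def by blast
          have "(\<theta> * r / 2) * r ^ (L-3) \<le> (real (L-2) * r') * r ^ (L-3)"
            using order_trans[OF cn c] unfolding pw by (simp add: algebra_simps)
          then have A: "\<theta> * r / 2 \<le> real (L-2) * r'" using rpos by (simp add: mult_le_cancel_right)
          have B: "\<theta> * (\<theta>^2 / 2 * real n) / 2 \<le> \<theta> * r / 2" using Rlo thp unfolding r_def by (simp add: mult.commute)
          have C: "real (L-2) * r' \<le> real (L-2) * (2 * \<theta>^4 * real n)" using R'hi unfolding r'_def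
            by (simp add: mult_left_mono)
          have e1: "\<theta> * (\<theta>^2 / 2 * real n) / 2 = \<theta>^3 * real n * (1/4)"
            by (simp add: power2_eq_square power3_eq_cube)
          have e2: "real (L-2) * (2 * \<theta>^4 * real n) = \<theta>^3 * real n * (2 * real (L-2) * \<theta>)"
            by (simp add: power3_eq_cube power4_eq_xxxx)
          have D: "\<theta>^3 * real n * (1/4) \<le> \<theta>^3 * real n * (2 * real (L-2) * \<theta>)"
            using A B C e1 e2 by linarith
          have "1/4 \<le> 2 * real (L-2) * \<theta>" 
          proof -
            have "0 < \<theta>^3 * real n" using thp np by simp
            then show ?thesis using D mult_le_cancel_left_pos by blast
          qed
          moreover have "2 * real (L-2) * \<theta> \<le> 2 * real (L-2) * (1 / (8 * real L))"
            using th by (intro mult_left_mono) auto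
          moreover have "2 * real (L-2) * (1 / (8 * real L)) < 1/4" using L3 by (simp add: field_simps of_nat_diff)
          ultimately show False by linarith
        qed
      qed
    qed
  qed
qed

end
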